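(* Let $a_1,\dots,a_m$ be vectors in $\mathbb R^n$ equipped with a Euclidean norm $\lVert\cdot\rVert$, and suppose $\mathrm{MinHeight}(a_1,\dots,a_m)>0$. Then every $w\in\mathrm{span}(a_1,\dots,a_m)$ can be written as $w=\lambda_1a_1+\dots+\lambda_ma_m$ with $|\lambda_j|\le \lVert w\rVert/\mathrm{MinHeight}(a_1,\dots,a_m)$ for every $j\in\{1,\dots,m\}$.
   Context: $\mathrm{MinHeight}(a_1,\dots,a_m):=\min_{j}\,d\big(a_j,\mathrm{span}(a_1,\dots,\widehat{a}_j,\dots,a_m)\big)$, where $d$ is the distance induced by $\lVert\cdot\rVert$ and $\widehat a_j$ means $a_j$ is omitted. *)

theory Defs
  imports "HOL-Analysis.Analysis"
begin

definition MinHeight :: "(nat \<Rightarrow> 'a::real_normed_vector) \<Rightarrow> nat \<Rightarrow> real" where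
  "MinHeight a m = Min ((\<lambda>j. infdist (a j) (span (a ` ({1..m} - {j})))) ` {1..m})"

end

theory Submission
  imports Defs
begin

lemma span_idx:
  fixes a :: "nat \<Rightarrow> 'a::real_vector"
  assumes "finite I" "w \<in> span (a ` I)"
  shows "\<exists>c. w = (\<Sum>j\<in>I. c j *\<^sub>R a j)"
  using assms(2)
proof (induction rule: span_induct)
  case base
  show ?case unfolding subspace_def
  proof (intro conjI ballI allI)
    show "0 \<in> {w. \<exists>c. w = (\<Sum>j\<in>I. c j *\<^sub>R a j)}"
      by (auto intro!: exI[of _ "\<lambda>_. 0"])
  next
    fix x y assume "x \<in> {w. \<exists>c. w = (\<Sum>j\<in>I. c j *\<^sub>R a j)}" "y \<in> {w. \<exists>c. w = (\<Sum>j\<in>I. c j *\<^sub>R a j)}"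
    then obtain c d where "x = (\<Sum>j\<in>I. c j *\<^sub>R a j)" "y = (\<Sum>j\<in>I. d j *\<^sub>R a j)" by auto
    then show "x + y \<in> {w. \<exists>c. w = (\<Sum>j\<in>I. c j *\<^sub>R a j)}"
      by (auto intro!: exI[of _ "\<lambda>j. c j + d j"] simp: sum.distrib scaleR_add_left)
  next
    fix r x assume "x \<in> {w. \<exists>c. w = (\<Sum>j\<in>I. c j *\<^sub>R a j)}"
    then obtain c where "x = (\<Sum>j\<in>I. c j *\<^sub>R a j)" by auto
    then show "r *\<^sub>R x \<in> {w. \<exists>c. w = (\<Sum>j\<in>I. c j *\<^sub>R a j)}"
      by (auto intro!: exI[of _ "\<lambda>j. r * c j"] simp: scaleR_sum_right)
  qed
next
  case (step x)
  then obtain i where i: "i \<in> I" "x = a i" by auto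
  have "x = (\<Sum>j\<in>I. (if j = i then a j else 0))"
    using i assms(1) by (simp add: sum.delta)
  then show ?case
    by (intro CollectI exI[of _ "\<lambda>j. if j = i then 1 else 0"]) (auto intro: sum.cong)
qed

theorem mainTheorem7:
  fixes a :: "nat \<Rightarrow> 'a::euclidean_space" and m :: nat and w :: 'a
  assumes "MinHeight a m > 0"
    and "w \<in> span (a ` {1..m})"
  shows "\<exists>c::nat \<Rightarrow> real. w = (\<Sum>j=1..m. c j *\<^sub>R a j) \<and>
           (\<forall>j\<in>{1..m}. \<bar>c j\<bar> \<le> norm w / MinHeight a m)"
proof -
  let ?h = "MinHeight a m"
  obtain c where c: "w = (\<Sum>j=1..m. c j *\<^sub>R a j)"
    using span_idx[OF _ assms(2)] by auto
  have "\<bar>c j\<bar> \<le> norm w / ?h" if j: "j \<in> {1..m}" for j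
  proof (cases "c j = 0")
    case True then show ?thesis using assms(1) by simp
  next
    case False
    let ?S = "span (a ` ({1..m} - {j}))"
    define v where "v = - (1 / c j) *\<^sub>R (\<Sum>i\<in>{1..m} - {j}. c i *\<^sub>R a i)"
    have vS: "v \<in> ?S" unfolding v_def
      by (intro span_mul span_sum span_base) auto
    have "w = c j *\<^sub>R a j + (\<Sum>i\<in>{1..m} - {j}. c i *\<^sub>R a i)"
      using c j by (simp add: sum.remove)
    also have "\<dots> = c j *\<^sub>R (a j - v)"
      using False by (simp add: v_def algebra_simps)
    finally have nw: "norm w = \<bar>c j\<bar> * dist (a j) v"
      by (simp add: dist_norm)
    have "?h \<le> infdist (a j) ?S"
      unfolding MinHeight_def using j by (intro Min_le) auto
    also have "\<dots> \<le> dist (a j) v" by (rule infdist_le[OF vS])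
    finally have "\<bar>c j\<bar> * ?h \<le> norm w"
      unfolding nw by (simp add: mult_left_mono)
    then show ?thesis using assms(1) by (simp add: field_simps)
  qed
  then show ?thesis using c by blast
qed

end
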